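(* Let $F$ be a commutative field, $\Sigma=\mathrm{PG}(n,F)$, $1\le h\le n-1$, and let $K$ be a linear complex of $h$-subspaces of $\Sigma$. Let $U\subseteq W$ be subspaces of $\Sigma$ with $\dim U\le h-1$ and $\dim W\ge h+1$, and put $K(U,W):=K\cap[U,W]_h$ (the elements of $K$ containing $U$ and contained in $W$). If $[U,W]_h\not\subseteq K$, then $K(U,W)$ is a linear complex of $(h-1-\dim U)$-subspaces in the projective space $[U,W]$.
   Context: A $d$-subspace is a projective subspace of dimension $d$; $[U,W]$ denotes the set of subspaces $X$ with $U\subseteq X\subseteq W$, and $[U,W]_d$ its members of dimension $d$. With $\dim U=k-1$, $[U,W]$ is a projective space isomorphic to $\mathrm{PG}(\dim W-k,F)$, whose $d$-dimensional subspaces are the $(k+d)$-subspaces of $\Sigma$ in $[U,W]$. Linear complex: let $N=\binom{n+1}{h+1}-1$ and let $\wp_{n,h}$ be the Plücker embedding sending the $h$-subspace spanned by linearly independent $v_0,\dots,v_h\in F^{n+1}$ to the point $F(v_0\wedge\cdots\wedge v_h)$ of $\mathrm{PG}(N,F)=\mathbb P(\bigwedge^{h+1}F^{n+1})$; its image is the Grassmann variety $\mathcal G_{n,h}$. A linear complex of $h$-subspaces is a set of the form $(H\cap\mathcal G_{n,h})^{\wp_{n,h}^{-1}}$ for a hyperplane $H$ of $\mathrm{PG}(N,F)$, i.e. the set of $h$-subspaces whose Plücker image lies in $H$. Linear complexes in the projective space $[U,W]$ are defined in the same way via an identification of $[U,W]$ with $\mathrm{PG}(\dim W-\dim U-1,F)$.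 *)

theory Defs
  imports "HOL-Combinatorics.Permutations"
begin

text \<open>Vectors of F^(n+1) are functions nat => F supported on {0..n}.
  A projective d-subspace of PG(n,F) is identified with its underlying
  (d+1)-dimensional vector subspace of F^(n+1).\<close>

definition vecs :: "nat \<Rightarrow> (nat \<Rightarrow> 'a::field) set" where
  "vecs n = {v. \<forall>i. n < i \<longrightarrow> v i = 0}"

definition lin_comb :: "(nat \<Rightarrow> 'a::field) list \<Rightarrow> (nat \<Rightarrow> 'a) \<Rightarrow> (nat \<Rightarrow> 'a)" where
  "lin_comb vs cs = (\<lambda>i. \<Sum>j<length vs. cs j * (vs ! j) i)"

definition span_l :: "(nat \<Rightarrow> 'a::field) list \<Rightarrow> (nat \<Rightarrow> 'a) set" where
  "span_l vs = {lin_comb vs cs | cs. True}"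

definition indep :: "(nat \<Rightarrow> 'a::field) list \<Rightarrow> bool" where
  "indep vs \<longleftrightarrow> (\<forall>cs. lin_comb vs cs = (\<lambda>_. 0) \<longrightarrow> (\<forall>j<length vs. cs j = 0))"

definition is_basis :: "nat \<Rightarrow> (nat \<Rightarrow> 'a::field) list \<Rightarrow> (nat \<Rightarrow> 'a) set \<Rightarrow> bool" where
  "is_basis n vs X \<longleftrightarrow> set vs \<subseteq> vecs n \<and> indep vs \<and> X = span_l vs"

text \<open>X is a projective d-subspace of PG(n,F) (d = -1 gives the empty subspace {0})\<close>
definition psub :: "nat \<Rightarrow> int \<Rightarrow> (nat \<Rightarrow> 'a::field) set \<Rightarrow> bool" where
  "psub n d X \<longleftrightarrow> d \<ge> -1 \<and> (\<exists>vs. length vs = nat (d + 1) \<and> is_basis n vs X)"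

definition det_l :: "nat \<Rightarrow> (nat \<Rightarrow> nat \<Rightarrow> 'a::field) \<Rightarrow> 'a" where
  "det_l k M = (\<Sum>p\<in>{p. p permutes {..<k}}. of_int (sign p) * (\<Prod>i<k. M i (p i)))"

text \<open>Pluecker coordinate of v_0 wedge ... wedge v_h at the basis vector e_S,
  S an (h+1)-subset of {0..n}: the corresponding maximal minor.\<close>
definition plucker_coord :: "(nat \<Rightarrow> 'a::field) list \<Rightarrow> nat set \<Rightarrow> 'a" where
  "plucker_coord vs S = det_l (length vs) (\<lambda>i j. (vs ! i) (sorted_list_of_set S ! j))"

text \<open>Linear complex of h-subspaces of PG(n,F): the h-subspaces whose Pluecker image
  lies in the hyperplane sum_S c S * x_S = 0 of PG(N,F), c nonzero.\<close>
definition linear_complex :: "nat \<Rightarrow> nat \<Rightarrow> (nat \<Rightarrow> 'a::field) set set \<Rightarrow> bool" where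
  "linear_complex n h K \<longleftrightarrow>
     (\<exists>c :: nat set \<Rightarrow> 'a.
        (\<exists>S. S \<subseteq> {..n} \<and> card S = h + 1 \<and> c S \<noteq> 0) \<and>
        K = {X. psub n (int h) X \<and>
                (\<exists>vs. length vs = h + 1 \<and> is_basis n vs X \<and>
                   (\<Sum>S\<in>{S. S \<subseteq> {..n} \<and> card S = h + 1}. c S * plucker_coord vs S) = 0)})"

definition interval :: "nat \<Rightarrow> int \<Rightarrow> (nat \<Rightarrow> 'a::field) set \<Rightarrow> (nat \<Rightarrow> 'a) set \<Rightarrow> (nat \<Rightarrow> 'a) set set" where
  "interval n d U W = {X. psub n d X \<and> U \<subseteq> X \<and> X \<subseteq> W}"

text \<open>Identification of [U,W] with PG(m,F), m = length bs - 1: bs extends a basis of U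
  to a basis of W; a subspace Y of F^(m+1) corresponds to U + phi(Y), phi(y) = sum y_j bs_j.\<close>
definition ident_ok :: "nat \<Rightarrow> (nat \<Rightarrow> 'a::field) set \<Rightarrow> (nat \<Rightarrow> 'a) set \<Rightarrow> (nat \<Rightarrow> 'a) list \<Rightarrow> bool" where
  "ident_ok n U W bs \<longleftrightarrow> bs \<noteq> [] \<and>
     (\<exists>us. is_basis n us U \<and> is_basis n (us @ bs) W)"

definition lift :: "(nat \<Rightarrow> 'a::field) set \<Rightarrow> (nat \<Rightarrow> 'a) list \<Rightarrow> (nat \<Rightarrow> 'a) set \<Rightarrow> (nat \<Rightarrow> 'a) set" where
  "lift U bs Y = {(\<lambda>i. u i + lin_comb bs y i) | u y. u \<in> U \<and> y \<in> Y}"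

text \<open>S is a linear complex of d-subspaces in the projective space [U,W]:
  under (every) identification of [U,W] with PG(m,F), S is the image of a linear complex.\<close>
definition linear_complex_in :: "nat \<Rightarrow> (nat \<Rightarrow> 'a::field) set \<Rightarrow> (nat \<Rightarrow> 'a) set \<Rightarrow> nat \<Rightarrow> (nat \<Rightarrow> 'a) set set \<Rightarrow> bool" where
  "linear_complex_in n U W d S \<longleftrightarrow>
     (\<forall>bs. ident_ok n U W bs \<longrightarrow>
        (\<exists>L. linear_complex (length bs - 1) d L \<and> S = lift U bs ` L))"

end

theory Submission
  imports Defs "Jordan_Normal_Form.Determinant" "HOL-Library.Function_Algebras"
begin


lemma sum_split_add: "(\<Sum>j<(a::nat)+b. f j) = (\<Sum>j<a. f j) + (\<Sum>j<b. f (j + a)::'a::comm_monoid_add)"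
proof -
  have "(\<Sum>j<a+b. f j) = sum f {0..<a} + sum f {a..<a+b}"
    by (simp add: atLeast0LessThan[symmetric] sum.atLeastLessThan_concat)
  also have "sum f {a..<a+b} = (\<Sum>j<b. f (j + a))"
    using sum.shift_bounds_nat_ivl[of f 0 a b] by (simp add: atLeast0LessThan add.commute)
  finally show ?thesis by (simp add: atLeast0LessThan)
qed

lemma lin_comb_append:
  "lin_comb (xs @ ys) cs = (\<lambda>i. lin_comb xs cs i + lin_comb ys (\<lambda>j. cs (j + length xs)) i)"
proof (rule ext)
  fix i
  have "lin_comb (xs @ ys) cs i = (\<Sum>j<length xs + length ys. cs j * ((xs@ys)!j) i)"
    by (simp add: lin_comb_def)
  also have "\<dots> = (\<Sum>j<length xs. cs j * ((xs@ys)!j) i) + (\<Sum>j<length ys. cs (j + length xs) * ((xs@ys)!(j + length xs)) i)"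
    by (rule sum_split_add)
  also have "\<dots> = lin_comb xs cs i + lin_comb ys (\<lambda>j. cs (j + length xs)) i"
    unfolding lin_comb_def by (simp add: nth_append)
  finally show "lin_comb (xs @ ys) cs i = lin_comb xs cs i + lin_comb ys (\<lambda>j. cs (j + length xs)) i" .
qed
lemma lin_comb_cong:
  assumes "\<And>j. j < length vs \<Longrightarrow> cs j = ds j"
  shows "lin_comb vs cs = lin_comb vs ds"
  unfolding lin_comb_def using assms by (auto intro!: sum.cong)

lemma lin_comb_add: "lin_comb vs (\<lambda>j. a j + b j) = (\<lambda>i. lin_comb vs a i + lin_comb vs b i)"
  unfolding lin_comb_def by (auto simp: fun_eq_iff algebra_simps sum.distrib)

lemma lin_comb_diff: "lin_comb vs (\<lambda>j. a j - b j) = (\<lambda>i. lin_comb vs a i - lin_comb vs b i)"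
  unfolding lin_comb_def by (auto simp: fun_eq_iff algebra_simps sum_subtractf)

lemma lin_comb_scale: "lin_comb vs (\<lambda>j. c * a j) = (\<lambda>i. c * lin_comb vs a i)"
  unfolding lin_comb_def by (auto simp: fun_eq_iff algebra_simps sum_distrib_left)

lemma lin_comb_zero: "lin_comb vs (\<lambda>_. 0) = (\<lambda>_. 0)"
  unfolding lin_comb_def by auto

lemma lin_comb_map: "lin_comb (map (lin_comb bs) ys) cs = lin_comb bs (lin_comb ys cs)"
proof (rule ext)
  fix i
  have "(\<Sum>j<length ys. cs j * (\<Sum>t<length bs. (ys!j) t * (bs!t) i)) =
        (\<Sum>t<length bs. (\<Sum>j<length ys. cs j * (ys!j) t) * (bs!t) i)"
    by (simp add: sum_distrib_left sum_distrib_right mult.assoc) (rule sum.swap)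
  then show "lin_comb (map (lin_comb bs) ys) cs i = lin_comb bs (lin_comb ys cs) i"
    by (simp add: lin_comb_def)
qed

lemma lin_comb_unit: "j < length vs \<Longrightarrow> lin_comb vs (\<lambda>i. if i = j then 1 else 0) = vs ! j"
proof (rule ext)
  fix x assume j: "j < length vs"
  have "\<And>l. (if l = j then 1 else 0) * (vs ! l) x = (if l = j then (vs ! l) x else 0)" by simp
  then show "lin_comb vs (\<lambda>i. if i = j then 1 else 0) x = (vs ! j) x"
    unfolding lin_comb_def using j by (simp only:) simp
qed

lemma lin_comb_vecs: "set vs \<subseteq> vecs n \<Longrightarrow> lin_comb vs cs \<in> vecs n"
  unfolding vecs_def lin_comb_def
proof (clarsimp)
  fix i assume A: "set vs \<subseteq> {v. \<forall>i. n < i \<longrightarrow> v i = 0}" and i: "n < i"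
  have "\<And>j. j < length vs \<Longrightarrow> (vs ! j) i = 0" using A i nth_mem by blast
  then show "(\<Sum>j<length vs. cs j * (vs ! j) i) = 0" by simp
qed

lemma span_l_add: "x \<in> span_l vs \<Longrightarrow> y \<in> span_l vs \<Longrightarrow> (\<lambda>i. x i + y i) \<in> span_l vs"
  unfolding span_l_def by (auto simp flip: lin_comb_add)

lemma span_l_diff: "x \<in> span_l vs \<Longrightarrow> y \<in> span_l vs \<Longrightarrow> (\<lambda>i. x i - y i) \<in> span_l vs"
  unfolding span_l_def by (auto simp flip: lin_comb_diff)

lemma span_l_scale: "x \<in> span_l vs \<Longrightarrow> (\<lambda>i. c * x i) \<in> span_l vs"
  unfolding span_l_def by (auto simp flip: lin_comb_scale)

lemma span_l_zero: "(\<lambda>_. 0) \<in> span_l vs"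
  unfolding span_l_def by (rule CollectI, rule exI[of _ "\<lambda>_. 0"]) (simp add: lin_comb_zero)

lemma span_l_nth: "v \<in> set vs \<Longrightarrow> v \<in> span_l vs"
  unfolding span_l_def by (auto simp: in_set_conv_nth) (metis lin_comb_unit)


section \<open>Determinants\<close>

lemma det_l_jnf: "det_l k M = det (mat k k (\<lambda>(i,j). M i j))"
proof -
  have "det (mat k k (\<lambda>(i,j). M i j)) = (\<Sum>p\<in>{p. p permutes {0..<k}}. of_int (sign p) * (\<Prod>i=0..<k. mat k k (\<lambda>(i,j). M i j) $$ (i, p i)))"
    by (rule det_def') simp
  also have "\<dots> = det_l k M"
    unfolding det_l_def atLeast0LessThan
  proof (rule sum.cong[OF refl])
    fix p assume "p \<in> {p. p permutes {..<k}}"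
    then have p: "p permutes {..<k}" by simp
    have "\<And>i. i \<in> {..<k} \<Longrightarrow> mat k k (\<lambda>(i,j). M i j) $$ (i, p i) = M i (p i)"
      using permutes_in_image[OF p] by simp
    then show "of_int (sign p) * (\<Prod>i\<in>{..<k}. mat k k (\<lambda>(i,j). M i j) $$ (i, p i)) =
      of_int (sign p) * (\<Prod>i\<in>{..<k}. M i (p i))" by simp
  qed
  finally show ?thesis by simp
qed

lemma det_l_cong: "(\<And>i j. i < k \<Longrightarrow> j < k \<Longrightarrow> M i j = M' i j) \<Longrightarrow> det_l k M = det_l k M'"
  unfolding det_l_def
proof (rule sum.cong[OF refl])
  fix p assume eq: "\<And>i j. i < k \<Longrightarrow> j < k \<Longrightarrow> M i j = M' i j" and "p \<in> {p. p permutes {..<k}}"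
  then have p: "p permutes {..<k}" by simp
  have "\<And>i. i \<in> {..<k} \<Longrightarrow> M i (p i) = M' i (p i)"
    using permutes_in_image[OF p] eq by simp
  then show "of_int (sign p) * (\<Prod>i<k. M i (p i)) = of_int (sign p) * (\<Prod>i<k. M' i (p i))"
    by simp
qed

lemma det_l_identical_rows:
  assumes "i \<noteq> j" "i < k" "j < k" "\<And>c. c < k \<Longrightarrow> M i c = M j c"
  shows "det_l k M = 0"
proof -
  have "row (mat k k (\<lambda>(i,j). M i j)) i = row (mat k k (\<lambda>(i,j). M i j)) j"
    by (rule eq_vecI) (simp_all add: assms)
  then show ?thesis unfolding det_l_jnf
    by (intro det_identical_rows[OF _ assms(1-3)]) simp_all
qed

lemma det_l_permute_rows:
  assumes "p permutes {..<k}"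
  shows "det_l k (\<lambda>i j. M (p i) j) = of_int (sign p) * det_l k M"
proof -
  have p: "p permutes {0..<k}" using assms by (simp add: atLeast0LessThan)
  have "mat k k (\<lambda>(i,j). M (p i) j) = mat k k (\<lambda>(i,j). mat k k (\<lambda>(i,j). M i j) $$ (p i, j))"
  proof (rule eq_matI)
    fix i j assume "i < dim_row (mat k k (\<lambda>(i,j). mat k k (\<lambda>(i,j). M i j) $$ (p i, j)))"
      "j < dim_col (mat k k (\<lambda>(i,j). mat k k (\<lambda>(i,j). M i j) $$ (p i, j)))"
    then have ij: "i < k" "j < k" by simp_all
    then have "p i < k" using permutes_in_image[OF assms] by simp
    then show "mat k k (\<lambda>(i,j). M (p i) j) $$ (i, j) = mat k k (\<lambda>(i,j). mat k k (\<lambda>(i,j). M i j) $$ (p i, j)) $$ (i, j)"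
      using ij by simp
  qed simp_all
  then show ?thesis unfolding det_l_jnf
    using det_permute_rows[OF _ p, of "mat k k (\<lambda>(i,j). M i j)"] by simp
qed

lemma det_l_mult:
  "det_l k (\<lambda>i j. \<Sum>l<k. A i l * B l j) = det_l k A * det_l k B"
proof -
  have "mat k k (\<lambda>(i,j). \<Sum>l<k. A i l * B l j) = mat k k (\<lambda>(i,j). A i j) * mat k k (\<lambda>(i,j). B i j)"
  proof (rule eq_matI)
    fix i j assume "i < dim_row (mat k k (\<lambda>(i,j). A i j) * mat k k (\<lambda>(i,j). B i j))"
      "j < dim_col (mat k k (\<lambda>(i,j). A i j) * mat k k (\<lambda>(i,j). B i j))"
    then have ij: "i < k" "j < k" by simp_all
    have "(mat k k (\<lambda>(i,j). A i j) * mat k k (\<lambda>(i,j). B i j)) $$ (i,j)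
       = (\<Sum>l=0..<k. A i l * B l j)"
      using ij by (simp add: scalar_prod_def)
    then show "mat k k (\<lambda>(i,j). \<Sum>l<k. A i l * B l j) $$ (i, j) = (mat k k (\<lambda>(i,j). A i j) * mat k k (\<lambda>(i,j). B i j)) $$ (i, j)"
      using ij by (simp add: atLeast0LessThan)
  qed simp_all
  then show ?thesis unfolding det_l_jnf
    by (simp add: det_mult[of _ k])
qed

lemma prod_split_at:
  assumes "(q::nat) \<le> N"
  shows "(\<Prod>i<N. h i) = (\<Prod>i<q. h i) * (\<Prod>i\<in>{q..<N}. (h i :: 'b::comm_monoid_mult))"
proof -
  have "{..<N} = {..<q} \<union> {q..<N}" using assms by auto
  then show ?thesis by (simp add: prod.union_disjoint ivl_disj_int)
qed

lemma det_l_expand_rows: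
  assumes qN: "q \<le> N" and fA: "finite A"
  shows "det_l N (\<lambda>i j. if i < q then (\<Sum>t\<in>A. a i t * R t j) else P i j)
    = (\<Sum>f\<in>PiE {..<q} (\<lambda>_. A). (\<Prod>i<q. a i (f i)) * det_l N (\<lambda>i j. if i < q then R (f i) j else P i j))"
    (is "det_l N ?M = (\<Sum>f\<in>?F. ?a f * det_l N (?Mf f))")
proof -
  have L: "(\<Prod>i<N. ?M i (p i)) = (\<Sum>f\<in>?F. ?a f * ((\<Prod>i<q. R (f i) (p i)) * (\<Prod>i\<in>{q..<N}. P i (p i))))" for p
  proof -
    have "(\<Prod>i<N. ?M i (p i)) = (\<Prod>i<q. ?M i (p i)) * (\<Prod>i\<in>{q..<N}. ?M i (p i))"
      by (rule prod_split_at[OF qN])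
    also have "(\<Prod>i<q. ?M i (p i)) = (\<Prod>i<q. \<Sum>t\<in>A. a i t * R t (p i))"
      by (rule prod.cong) simp_all
    also have "\<dots> = (\<Sum>f\<in>?F. \<Prod>i<q. a i (f i) * R (f i) (p i))"
      by (rule prod_sum_PiE) (simp_all add: fA)
    also have "(\<Prod>i\<in>{q..<N}. ?M i (p i)) = (\<Prod>i\<in>{q..<N}. P i (p i))"
      by (rule prod.cong) simp_all
    finally show ?thesis
      by (simp add: prod.distrib sum_distrib_right mult.assoc)
  qed
  have Rf: "(\<Prod>i<N. ?Mf f i (p i)) = (\<Prod>i<q. R (f i) (p i)) * (\<Prod>i\<in>{q..<N}. P i (p i))" for f p
  proof -
    have "(\<Prod>i<N. ?Mf f i (p i)) = (\<Prod>i<q. ?Mf f i (p i)) * (\<Prod>i\<in>{q..<N}. ?Mf f i (p i))"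
      by (rule prod_split_at[OF qN])
    also have "(\<Prod>i<q. ?Mf f i (p i)) = (\<Prod>i<q. R (f i) (p i))"
      by (rule prod.cong) simp_all
    also have "(\<Prod>i\<in>{q..<N}. ?Mf f i (p i)) = (\<Prod>i\<in>{q..<N}. P i (p i))"
      by (rule prod.cong) simp_all
    finally show ?thesis .
  qed
  have "det_l N ?M = (\<Sum>p\<in>{p. p permutes {..<N}}. \<Sum>f\<in>?F. ?a f * (of_int (sign p) * (\<Prod>i<N. ?Mf f i (p i))))"
    unfolding det_l_def L Rf by (simp add: sum_distrib_left mult.left_commute)
  also have "\<dots> = (\<Sum>f\<in>?F. \<Sum>p\<in>{p. p permutes {..<N}}. ?a f * (of_int (sign p) * (\<Prod>i<N. ?Mf f i (p i))))"
    by (rule sum.swap)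
  also have "\<dots> = (\<Sum>f\<in>?F. ?a f * det_l N (?Mf f))"
    unfolding det_l_def by (simp add: sum_distrib_left)
  finally show ?thesis .
qed

section \<open>Vector space structure\<close>

definition sc :: "'a::field \<Rightarrow> (nat \<Rightarrow> 'a) \<Rightarrow> (nat \<Rightarrow> 'a)" where "sc c v = (\<lambda>i. c * v i)"

interpretation fv: vector_space "sc :: 'a::field \<Rightarrow> (nat \<Rightarrow> 'a) \<Rightarrow> (nat \<Rightarrow> 'a)"
  by unfold_locales (simp_all add: sc_def plus_fun_def fun_eq_iff distrib_left distrib_right)

lemma sum_fun_apply: "(\<Sum>x\<in>A. f x) i = (\<Sum>x\<in>A. f x i)"
  by (induct A rule: infinite_finite_induct) auto

lemma bridge_sum:
  assumes "distinct vs"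
  shows "(\<Sum>x\<in>set vs. sc (u x) x) = lin_comb vs (\<lambda>j. u (vs!j))"
proof (rule ext)
  fix i
  have b: "bij_betw ((!) vs) {..<length vs} (set vs)" by (rule bij_betw_nth[OF assms]) simp_all
  have "(\<Sum>x\<in>set vs. sc (u x) x) i = (\<Sum>x\<in>set vs. u x * x i)"
    by (simp add: sum_fun_apply sc_def)
  also have "\<dots> = (\<Sum>j<length vs. u (vs!j) * (vs!j) i)"
    by (rule sum.reindex_bij_betw[OF b, symmetric])
  finally show "(\<Sum>x\<in>set vs. sc (u x) x) i = lin_comb vs (\<lambda>j. u (vs!j)) i"
    by (simp add: lin_comb_def)
qed

lemma lin_comb_as_sum: "lin_comb vs cs = (\<Sum>j<length vs. sc (cs j) (vs!j))"
  by (simp add: fun_eq_iff sum_fun_apply sc_def lin_comb_def)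

lemma span_l_eq: "span_l vs = fv.span (set vs)"
proof
  show "span_l vs \<subseteq> fv.span (set vs)"
  proof
    fix x assume "x \<in> span_l vs"
    then obtain cs where x: "x = lin_comb vs cs" by (auto simp: span_l_def)
    show "x \<in> fv.span (set vs)" unfolding x lin_comb_as_sum
      by (intro fv.span_sum fv.span_scale fv.span_base) simp
  qed
  have "fv.subspace (span_l vs)"
    unfolding fv.subspace_def
    using span_l_zero[of vs] span_l_add[of _ vs] span_l_scale[of _ vs]
    by (auto simp: zero_fun_def plus_fun_def sc_def)
  then show "fv.span (set vs) \<subseteq> span_l vs"
    by (intro fv.span_minimal) (auto intro: span_l_nth)
qed

lemma indep_distinct:
  assumes "indep vs" shows "distinct vs"
proof (rule ccontr)
  assume "\<not> distinct vs"
  then obtain i j where ij: "i < length vs" "j < length vs" "i \<noteq> j" "vs!i = vs!j"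
    by (auto simp: distinct_conv_nth)
  let ?cs = "\<lambda>l. (if l = i then 1 else 0) - (if l = j then 1 else (0::'a))"
  have "lin_comb vs ?cs = (\<lambda>x. (vs!i) x - (vs!j) x)"
    using lin_comb_diff[of vs "\<lambda>l. if l = i then 1 else 0" "\<lambda>l. if l = j then 1 else 0"]
      lin_comb_unit[OF ij(1)] lin_comb_unit[OF ij(2)] by simp
  also have "\<dots> = (\<lambda>_. 0)" using ij by simp
  finally have "?cs i = 0" using assms ij unfolding indep_def by blast
  then show False using ij by simp
qed

lemma indep_independent:
  assumes "indep vs" shows "fv.independent (set vs)"
proof (rule fv.independent_if_scalars_zero)
  fix f x assume s: "(\<Sum>x\<in>set vs. sc (f x) x) = 0" and x: "x \<in> set vs"
  have "lin_comb vs (\<lambda>j. f (vs!j)) = (\<lambda>_. 0)"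
    using s bridge_sum[OF indep_distinct[OF assms], of f] by (simp add: zero_fun_def)
  then have "\<forall>j<length vs. f (vs!j) = 0" using assms unfolding indep_def by blast
  then show "f x = 0" using x by (auto simp: in_set_conv_nth)
qed simp

lemma independent_indep:
  assumes d: "distinct vs" and ind: "fv.independent (set vs)" shows "indep vs"
  unfolding indep_def
proof (rule allI, rule impI)
  fix cs assume lc: "lin_comb vs cs = (\<lambda>_. 0)"
  let ?u = "\<lambda>x. cs (inv_into {..<length vs} ((!) vs) x)"
  have inj: "inj_on ((!) vs) {..<length vs}" using d by (simp add: inj_on_nth)
  have u: "?u (vs!j) = cs j" if "j < length vs" for j
    using inv_into_f_f[OF inj] that by simp
  have "lin_comb vs (\<lambda>j. ?u (vs!j)) = lin_comb vs cs"
    by (rule lin_comb_cong) (simp add: u)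
  then have s0: "(\<Sum>x\<in>set vs. sc (?u x) x) = 0"
    using bridge_sum[OF d, of ?u] lc by (simp add: zero_fun_def)
  have H: "\<And>S u. S \<subseteq> set vs \<Longrightarrow> finite S \<Longrightarrow> (\<Sum>v\<in>S. sc (u v) v) = 0 \<Longrightarrow> \<forall>v\<in>S. u v = 0"
    using ind unfolding fv.independent_explicit_finite_subsets by blast
  have z: "\<forall>v\<in>set vs. ?u v = 0" by (rule H[OF order_refl finite_set s0])
  show "\<forall>j<length vs. cs j = 0"
  proof (intro allI impI)
    fix j assume j: "j < length vs"
    then have "vs ! j \<in> set vs" by simp
    then show "cs j = 0" using z u[OF j] by simp
  qed
qed

lemma indep_length_le:
  assumes "indep vs" "set vs \<subseteq> span_l ws"
  shows "length vs \<le> length ws"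
proof -
  have "card (set vs) \<le> card (set ws)"
    using fv.independent_span_bound[of "set ws" "set vs"] indep_independent[OF assms(1)] assms(2)
    by (simp add: span_l_eq)
  also have "\<dots> \<le> length ws" by (rule card_length)
  finally show ?thesis using distinct_card[OF indep_distinct[OF assms(1)]] by simp
qed

lemma basis_length_eq:
  assumes "indep vs" "indep ws" "span_l vs = span_l ws"
  shows "length vs = length ws"
  using indep_length_le[OF assms(1)] indep_length_le[OF assms(2)] assms(3) span_l_nth
  by (metis le_antisym subsetI)

lemma vecs_span_units: "vecs m \<subseteq> fv.span ((\<lambda>t. \<lambda>i. if i = t then (1::'a::field) else 0) ` {..m})"
proof
  fix v :: "nat \<Rightarrow> 'a" assume v: "v \<in> vecs m"
  have "v = (\<Sum>t\<in>{..m}. sc (v t) (\<lambda>i. if i = t then 1 else 0))"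
  proof (rule ext)
    fix i
    have "(\<Sum>t\<in>{..m}. sc (v t) (\<lambda>i. if i = t then 1 else 0)) i = (\<Sum>t\<in>{..m}. if t = i then v i else 0)"
      unfolding sum_fun_apply sc_def by (rule sum.cong) auto
    also have "\<dots> = v i" using v by (auto simp: vecs_def)
    finally show "v i = (\<Sum>t\<in>{..m}. sc (v t) (\<lambda>i. if i = t then 1 else 0)) i" by simp
  qed
  also have "\<dots> \<in> fv.span ((\<lambda>t. \<lambda>i. if i = t then (1::'a::field) else 0) ` {..m})"
    by (intro fv.span_sum fv.span_scale fv.span_base) simp
  finally show "v \<in> fv.span ((\<lambda>t. \<lambda>i. if i = t then (1::'a::field) else 0) ` {..m})" .
qed

lemma subspace_has_basis:
  fixes Y :: "(nat \<Rightarrow> 'a::field) set"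
  assumes sub: "fv.subspace Y" and Ym: "Y \<subseteq> vecs m"
  shows "\<exists>ys. indep ys \<and> set ys \<subseteq> Y \<and> span_l ys = Y"
proof -
  obtain B where B: "B \<subseteq> Y" "fv.independent B" "Y \<subseteq> fv.span B" "card B = fv.dim Y"
    by (rule fv.basis_exists)
  define E where "E = (\<lambda>t. \<lambda>i. if i = t then (1::'a) else 0) ` {..m}"
  have "Y \<subseteq> fv.span E" unfolding E_def using Ym vecs_span_units[of m] by (rule order.trans)
  then have BE: "B \<subseteq> fv.span E" using B(1) by (rule order.trans[rotated])
  have fE: "finite E" unfolding E_def by simp
  have "finite B" using fv.independent_span_bound[OF fE B(2) BE] by (rule conjunct1)
  then obtain ys where ys: "distinct ys" "set ys = B" using finite_distinct_list by blast
  have sp: "fv.span B = Y" by (rule fv.span_subspace[OF B(1) B(3) sub])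
  have i: "indep ys" using independent_indep[OF ys(1)] ys(2) B(2) by simp
  have s: "set ys \<subseteq> Y" using ys(2) B(1) by simp
  have e: "span_l ys = Y" using sp ys(2) by (simp add: span_l_eq)
  show ?thesis using i s e by blast
qed


lemma lift_span:
  "lift (span_l us) bs (span_l ys) = span_l (map (lin_comb bs) ys @ us)"
proof
  show "lift (span_l us) bs (span_l ys) \<subseteq> span_l (map (lin_comb bs) ys @ us)"
  proof
    fix z assume "z \<in> lift (span_l us) bs (span_l ys)"
    then obtain a b where z: "z = (\<lambda>i. lin_comb us a i + lin_comb bs (lin_comb ys b) i)"
      by (auto simp: lift_def span_l_def)
    let ?cs = "\<lambda>j. if j < length ys then b j else a (j - length ys)"
    have 1: "lin_comb (map (lin_comb bs) ys) ?cs = lin_comb bs (lin_comb ys b)"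
      unfolding lin_comb_map by (rule arg_cong[where f="lin_comb bs"], rule lin_comb_cong) simp
    have 2: "lin_comb us (\<lambda>j. ?cs (j + length ys)) = lin_comb us a"
      by (rule lin_comb_cong) simp
    have "lin_comb (map (lin_comb bs) ys @ us) ?cs = z"
      unfolding lin_comb_append length_map 1 2 z by (simp add: add.commute)
    then show "z \<in> span_l (map (lin_comb bs) ys @ us)" unfolding span_l_def by blast
  qed
  show "span_l (map (lin_comb bs) ys @ us) \<subseteq> lift (span_l us) bs (span_l ys)"
  proof
    fix z assume "z \<in> span_l (map (lin_comb bs) ys @ us)"
    then obtain cs where z: "z = lin_comb (map (lin_comb bs) ys @ us) cs" by (auto simp: span_l_def)
    have "z = (\<lambda>i. lin_comb us (\<lambda>j. cs (j + length ys)) i + lin_comb bs (lin_comb ys cs) i)"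
      unfolding z lin_comb_append length_map lin_comb_map by (simp add: add.commute)
    moreover have "lin_comb us (\<lambda>j. cs (j + length ys)) \<in> span_l us" "lin_comb ys cs \<in> span_l ys"
      unfolding span_l_def by blast+
    ultimately show "z \<in> lift (span_l us) bs (span_l ys)" unfolding lift_def by blast
  qed
qed

lemma indep_lift:
  assumes ib: "indep (us @ bs)" and iy: "indep ys" and ym: "set ys \<subseteq> vecs m"
    and lb: "length bs = Suc m"
  shows "indep (map (lin_comb bs) ys @ us)"
  unfolding indep_def
proof (rule allI, rule impI)
  fix cs assume lc: "lin_comb (map (lin_comb bs) ys @ us) cs = (\<lambda>_. 0)"
  define y where "y = lin_comb ys cs"
  define a where "a = (\<lambda>j. cs (j + length ys))"
  have e: "(\<lambda>i. lin_comb bs y i + lin_comb us a i) = (\<lambda>_. 0)"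
    using lc unfolding lin_comb_append length_map lin_comb_map y_def a_def .
  define cc where "cc = (\<lambda>j. if j < length us then a j else y (j - length us))"
  have "lin_comb (us @ bs) cc = (\<lambda>i. lin_comb us a i + lin_comb bs y i)"
  proof -
    have "lin_comb us cc = lin_comb us a" by (rule lin_comb_cong) (simp add: cc_def)
    moreover have "lin_comb bs (\<lambda>j. cc (j + length us)) = lin_comb bs y"
      by (rule lin_comb_cong) (simp add: cc_def)
    ultimately show ?thesis unfolding lin_comb_append by simp
  qed
  also have "\<dots> = (\<lambda>_. 0)" using e by (simp add: fun_eq_iff add.commute)
  finally have cc0: "\<forall>j<length (us @ bs). cc j = 0" using ib unfolding indep_def by blast
  have a0: "a j = 0" if "j < length us" for j using cc0[rule_format, of j] that by (simp add: cc_def)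
  have "y = (\<lambda>_. 0)"
  proof (rule ext)
    fix t
    show "y t = 0"
    proof (cases "t < length bs")
      case True
      then show ?thesis using cc0[rule_format, of "t + length us"] by (simp add: cc_def)
    next
      case False
      have "y \<in> vecs m" unfolding y_def by (rule lin_comb_vecs[OF ym])
      then show ?thesis using False lb by (simp add: vecs_def)
    qed
  qed
  then have y0: "\<forall>j<length ys. cs j = 0" using iy unfolding indep_def y_def by blast
  show "\<forall>j<length (map (lin_comb bs) ys @ us). cs j = 0"
  proof (intro allI impI)
    fix j assume j: "j < length (map (lin_comb bs) ys @ us)"
    show "cs j = 0"
    proof (cases "j < length ys")
      case True then show ?thesis using y0 by simp
    next
      case False
      then have "j - length ys < length us" "cs j = a (j - length ys)" using j by (simp_all add: a_def)
      then show ?thesis using a0 by simp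
    qed
  qed
qed

lemma lift_basis:
  assumes Ub: "is_basis n us U" and Wb: "is_basis n (us @ bs) W" and lb: "length bs = Suc m"
    and iy: "indep ys" and ym: "set ys \<subseteq> vecs m"
  shows "is_basis n (map (lin_comb bs) ys @ us) (lift U bs (span_l ys))"
    and "U \<subseteq> lift U bs (span_l ys)" and "lift U bs (span_l ys) \<subseteq> W"
proof -
  have U: "U = span_l us" and W: "W = span_l (us @ bs)" and ib: "indep (us @ bs)"
    and usn: "set us \<subseteq> vecs n" and bsn: "set bs \<subseteq> vecs n"
    using Ub Wb by (auto simp: is_basis_def)
  show "is_basis n (map (lin_comb bs) ys @ us) (lift U bs (span_l ys))"
    unfolding is_basis_def
  proof (intro conjI)
    show "set (map (lin_comb bs) ys @ us) \<subseteq> vecs n"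
      using usn lin_comb_vecs[OF bsn] by auto
    show "indep (map (lin_comb bs) ys @ us)" by (rule indep_lift[OF ib iy ym lb])
    show "lift U bs (span_l ys) = span_l (map (lin_comb bs) ys @ us)"
      unfolding U by (rule lift_span)
  qed
  show "U \<subseteq> lift U bs (span_l ys)"
  proof
    fix u assume u: "u \<in> U"
    have "lin_comb bs (\<lambda>_. 0) = (\<lambda>_. 0)" by (simp add: lin_comb_def)
    then have "u = (\<lambda>i. u i + lin_comb bs (\<lambda>_. 0) i)" by simp
    then show "u \<in> lift U bs (span_l ys)" unfolding lift_def using u span_l_zero by blast
  qed
  show "lift U bs (span_l ys) \<subseteq> W"
  proof
    fix z assume "z \<in> lift U bs (span_l ys)"
    then obtain a y where z: "z = (\<lambda>i. lin_comb us a i + lin_comb bs y i)"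
      by (auto simp: lift_def U span_l_def)
    let ?cc = "\<lambda>j. if j < length us then a j else y (j - length us)"
    have "lin_comb us ?cc = lin_comb us a" by (rule lin_comb_cong) simp
    moreover have "lin_comb bs (\<lambda>j. ?cc (j + length us)) = lin_comb bs y"
      by (rule lin_comb_cong) simp
    ultimately have "lin_comb (us @ bs) ?cc = z" unfolding lin_comb_append z by simp
    then show "z \<in> W" unfolding W span_l_def by blast
  qed
qed


lemma interval_rep:
  assumes Ub: "is_basis n us U" and Wb: "is_basis n (us @ bs) W" and lb: "length bs = Suc m"
    and Xb: "is_basis n xs X" and UX: "U \<subseteq> X" and XW: "X \<subseteq> W"
  shows "\<exists>ys. indep ys \<and> set ys \<subseteq> vecs m \<and> X = lift U bs (span_l ys) \<and>
           is_basis n (map (lin_comb bs) ys @ us) X"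
proof -
  have U: "U = span_l us" and W: "W = span_l (us @ bs)" and X: "X = span_l xs"
    using Ub Wb Xb by (auto simp: is_basis_def)
  define Y where "Y = {y. y \<in> vecs m \<and> lin_comb bs y \<in> X}"
  have sub: "fv.subspace Y"
    unfolding fv.subspace_def
  proof (intro conjI ballI allI)
    have "lin_comb bs 0 = (\<lambda>_. 0)" by (simp add: lin_comb_def)
    moreover have "(0::nat\<Rightarrow>'a) \<in> vecs m" by (simp add: vecs_def)
    ultimately show "0 \<in> Y" unfolding Y_def X using span_l_zero by auto
  next
    fix x y assume "x \<in> Y" "y \<in> Y"
    then have xy: "x \<in> vecs m" "y \<in> vecs m" "lin_comb bs x \<in> X" "lin_comb bs y \<in> X"
      by (auto simp: Y_def)
    have "lin_comb bs (x + y) = (\<lambda>i. lin_comb bs x i + lin_comb bs y i)"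
      using lin_comb_add[of bs x y] by (simp add: plus_fun_def)
    then have "lin_comb bs (x + y) \<in> X" using xy span_l_add X by simp
    moreover have "x + y \<in> vecs m" using xy by (simp add: vecs_def)
    ultimately show "x + y \<in> Y" by (simp add: Y_def)
  next
    fix c x assume "x \<in> Y"
    then have xy: "x \<in> vecs m" "lin_comb bs x \<in> X" by (auto simp: Y_def)
    have "lin_comb bs (sc c x) = (\<lambda>i. c * lin_comb bs x i)"
      using lin_comb_scale[of bs c x] by (simp add: sc_def)
    then have "lin_comb bs (sc c x) \<in> X" using xy span_l_scale X by simp
    moreover have "sc c x \<in> vecs m" using xy by (simp add: vecs_def sc_def)
    ultimately show "sc c x \<in> Y" by (simp add: Y_def)
  qed
  have Ym: "Y \<subseteq> vecs m" by (auto simp: Y_def)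
  obtain ys where ys: "indep ys" "set ys \<subseteq> Y" "span_l ys = Y"
    using subspace_has_basis[OF sub Ym] by blast
  have ysm: "set ys \<subseteq> vecs m" using ys(2) Ym by blast
  have XL: "X = lift U bs Y"
  proof
    show "X \<subseteq> lift U bs Y"
    proof
      fix x assume xX: "x \<in> X"
      then have "x \<in> span_l (us @ bs)" using XW W by blast
      then obtain cs where x: "x = lin_comb (us @ bs) cs" by (auto simp: span_l_def)
      define y where "y = (\<lambda>t. if t \<le> m then cs (t + length us) else 0)"
      define u where "u = lin_comb us cs"
      have ly: "lin_comb bs y = lin_comb bs (\<lambda>j. cs (j + length us))"
        by (rule lin_comb_cong) (simp add: y_def lb)
      have xu: "x = (\<lambda>i. u i + lin_comb bs y i)"
        unfolding x lin_comb_append ly u_def ..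
      have uU: "u \<in> U" unfolding U u_def span_l_def by blast
      then have "u \<in> X" using UX by blast
      then have "(\<lambda>i. x i - u i) \<in> X" using xX X span_l_diff by simp
      moreover have "(\<lambda>i. x i - u i) = lin_comb bs y" by (simp add: xu)
      moreover have "y \<in> vecs m" by (simp add: y_def vecs_def)
      ultimately have "y \<in> Y" by (simp add: Y_def)
      then show "x \<in> lift U bs Y" unfolding lift_def using uU xu by blast
    qed
    show "lift U bs Y \<subseteq> X"
    proof
      fix z assume "z \<in> lift U bs Y"
      then obtain u y where z: "z = (\<lambda>i. u i + lin_comb bs y i)" and u: "u \<in> U" and y: "y \<in> Y"
        by (auto simp: lift_def)
      have "u \<in> X" "lin_comb bs y \<in> X" using u UX y by (auto simp: Y_def)
      then show "z \<in> X" unfolding z X using span_l_add by blast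
    qed
  qed
  have "X = lift U bs (span_l ys)" using XL ys(3) by simp
  moreover have "is_basis n (map (lin_comb bs) ys @ us) (lift U bs (span_l ys))"
    by (rule lift_basis(1)[OF Ub Wb lb ys(1) ysm])
  ultimately show ?thesis using ys(1) ysm by auto
qed


lemma plucker_prop:
  fixes vs vs' :: "(nat \<Rightarrow> 'a::field) list"
  assumes "length vs' = length vs" "set vs' \<subseteq> span_l vs"
  shows "\<exists>\<delta>. \<forall>S. plucker_coord vs' S = \<delta> * plucker_coord vs S"
proof -
  let ?r = "length vs"
  have "\<forall>i. \<exists>cs. i < ?r \<longrightarrow> vs' ! i = lin_comb vs cs"
  proof (intro allI)
    fix i
    show "\<exists>cs. i < ?r \<longrightarrow> vs' ! i = lin_comb vs cs"
    proof (cases "i < ?r")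
      case True
      then have "vs' ! i \<in> set vs'" using assms(1) by simp
      then have "vs' ! i \<in> span_l vs" using assms(2) by blast
      then show ?thesis unfolding span_l_def by blast
    next
      case False then show ?thesis by blast
    qed
  qed
  then obtain A where A0: "\<forall>i. i < ?r \<longrightarrow> vs' ! i = lin_comb vs (A i)" by (rule choice[THEN exE])
  then have A: "\<And>i. i < ?r \<Longrightarrow> vs' ! i = lin_comb vs (A i)" by blast
  show ?thesis
  proof (intro exI allI)
    fix S
    have "plucker_coord vs' S = det_l ?r (\<lambda>i j. \<Sum>l<?r. A i l * (vs ! l) (sorted_list_of_set S ! j))"
      unfolding plucker_coord_def assms(1) by (rule det_l_cong) (simp add: A lin_comb_def)
    also have "\<dots> = det_l ?r A * plucker_coord vs S"
      unfolding det_l_mult plucker_coord_def ..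
    finally show "plucker_coord vs' S = det_l ?r A * plucker_coord vs S" .
  qed
qed

lemma sorted_set_facts:
  assumes "finite T"
  shows "distinct (sorted_list_of_set T)" "set (sorted_list_of_set T) = T"
    "length (sorted_list_of_set T) = card T"
  using assms by simp_all

lemma det_rows_expand:
  fixes ys us bs :: "(nat \<Rightarrow> 'a::field) list" and g :: "nat \<Rightarrow> nat"
  shows "det_l (length ys + length us) (\<lambda>i j. ((map (lin_comb bs) ys @ us) ! i) (g j))
    = (\<Sum>f\<in>PiE {..<length ys} (\<lambda>_. {..<length bs}). (\<Prod>i<length ys. (ys!i) (f i)) *
         det_l (length ys + length us) (\<lambda>i j. if i < length ys then (bs ! f i) (g j) else (us ! (i - length ys)) (g j)))"
proof -
  let ?q = "length ys" and ?N = "length ys + length us"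
  have "det_l ?N (\<lambda>i j. ((map (lin_comb bs) ys @ us) ! i) (g j))
      = det_l ?N (\<lambda>i j. if i < ?q then (\<Sum>t\<in>{..<length bs}. (ys!i) t * (bs!t) (g j)) else (us ! (i - ?q)) (g j))"
    by (rule det_l_cong) (simp add: nth_append lin_comb_def)
  also have "\<dots> = (\<Sum>f\<in>PiE {..<?q} (\<lambda>_. {..<length bs}). (\<Prod>i<?q. (ys!i) (f i)) *
         det_l ?N (\<lambda>i j. if i < ?q then (bs ! f i) (g j) else (us ! (i - ?q)) (g j)))"
    by (rule det_l_expand_rows) simp_all
  finally show ?thesis .
qed

lemma regroup:
  fixes a R P :: "nat \<Rightarrow> nat \<Rightarrow> 'a::field"
  assumes qN: "q \<le> N"
  shows "(\<Sum>f\<in>PiE {..<q} (\<lambda>_. {..<B}). (\<Prod>i<q. a i (f i)) * det_l N (\<lambda>i j. if i<q then R (f i) j else P i j))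
       = (\<Sum>T\<in>{T. T \<subseteq> {..<B} \<and> card T = q}. det_l q (\<lambda>i j. a i (sorted_list_of_set T ! j)) * det_l N (\<lambda>i j. if i<q then R (sorted_list_of_set T ! i) j else P i j))"
proof -
  define F where "F = PiE {..<q} (\<lambda>_. {..<B})"
  define I where "I = {f \<in> F. inj_on f {..<q}}"
  define Ts where "Ts = {T. T \<subseteq> {..<B} \<and> card T = q}"
  define Ps where "Ps = {p. p permutes {..<q}}"
  define t where "t = (\<lambda>T::nat set. sorted_list_of_set T)"
  define Df where "Df = (\<lambda>f. det_l N (\<lambda>i j. if i<q then R (f i) j else P i j))"
  define DT where "DT = (\<lambda>T. det_l N (\<lambda>i j. if i<q then R (t T ! i) j else P i j))"
  define G where "G = (\<lambda>f. (\<Prod>i<q. a i (f i)) * Df f)"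
  define h where "h = (\<lambda>(T,p). restrict (\<lambda>i. t T ! p i) {..<q})"
  define k where "k = (\<lambda>f::nat\<Rightarrow>nat. (f ` {..<q}, \<lambda>i. if i < q then inv_into {..<q} ((!) (t (f ` {..<q}))) (f i) else i))"
  have fF: "finite F" unfolding F_def by (simp add: finite_PiE)
  have s1: "(\<Sum>f\<in>F. G f) = (\<Sum>f\<in>I. G f)"
  proof (rule sum.mono_neutral_right[OF fF])
    show "I \<subseteq> F" by (auto simp: I_def)
    show "\<forall>f\<in>F - I. G f = 0"
    proof
      fix f assume "f \<in> F - I"
      then have "\<not> inj_on f {..<q}" by (auto simp: I_def)
      then obtain i j where ij: "i < q" "j < q" "i \<noteq> j" "f i = f j" by (auto simp: inj_on_def)
      have "Df f = 0" unfolding Df_def by (rule det_l_identical_rows[of i j]) (use ij qN in auto)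
      then show "G f = 0" by (simp add: G_def)
    qed
  qed
  have tT: "distinct (t T)" "set (t T) = T" "length (t T) = q" if "T \<in> Ts" for T
  proof -
    have "finite T" using that by (auto simp: Ts_def intro: finite_subset)
    then show "distinct (t T)" "set (t T) = T" "length (t T) = q" using that by (simp_all add: t_def Ts_def)
  qed
  have DT_perm: "Df (h (T,p)) = of_int (sign p) * DT T" if T: "T \<in> Ts" and p: "p \<in> Ps" for T p
  proof -
    have pq: "p permutes {..<q}" using p by (simp add: Ps_def)
    have pN: "p permutes {..<N}" by (rule permutes_subset[OF pq]) (use qN in auto)
    have "Df (h (T,p)) = det_l N (\<lambda>i j. (\<lambda>i j. if i<q then R (t T ! i) j else P i j) (p i) j)"
      unfolding Df_def
    proof (rule det_l_cong)
      fix i j assume i: "i < N" "j < N"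
      show "(if i<q then R (h (T,p) i) j else P i j) = (\<lambda>i j. if i<q then R (t T ! i) j else P i j) (p i) j"
      proof (cases "i < q")
        case True
        then have "p i < q" using permutes_in_image[OF pq] by simp
        then show ?thesis using True by (simp add: h_def)
      next
        case False
        then have "p i = i" using pq by (simp add: permutes_def)
        then show ?thesis using False by simp
      qed
    qed
    also have "\<dots> = of_int (sign p) * DT T" unfolding DT_def by (rule det_l_permute_rows[OF pN])
    finally show ?thesis .
  qed
  have fTs: "finite Ts" unfolding Ts_def by (rule finite_subset[of _ "Pow {..<B}"]) auto
  have fPs: "finite Ps" unfolding Ps_def by (rule finite_permutations) simp
  have s2: "(\<Sum>T\<in>Ts. det_l q (\<lambda>i j. a i (t T ! j)) * DT T) = (\<Sum>(T,p)\<in>Sigma Ts (\<lambda>_. Ps). G (h (T,p)))"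
  proof -
    have "(\<Sum>T\<in>Ts. det_l q (\<lambda>i j. a i (t T ! j)) * DT T) = (\<Sum>T\<in>Ts. \<Sum>p\<in>Ps. G (h (T,p)))"
    proof (rule sum.cong[OF refl])
      fix T assume T: "T \<in> Ts"
      have "det_l q (\<lambda>i j. a i (t T ! j)) * DT T = (\<Sum>p\<in>Ps. of_int (sign p) * (\<Prod>i<q. a i (t T ! p i)) * DT T)"
        unfolding det_l_def Ps_def by (simp add: sum_distrib_right)
      also have "\<dots> = (\<Sum>p\<in>Ps. G (h (T,p)))"
      proof (rule sum.cong[OF refl])
        fix p assume p: "p \<in> Ps"
        have "(\<Prod>i<q. a i (h (T,p) i)) = (\<Prod>i<q. a i (t T ! p i))" by (rule prod.cong) (simp_all add: h_def)
        then show "of_int (sign p) * (\<Prod>i<q. a i (t T ! p i)) * DT T = G (h (T,p))"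
          unfolding G_def DT_perm[OF T p] by simp
      qed
      finally show "det_l q (\<lambda>i j. a i (t T ! j)) * DT T = (\<Sum>p\<in>Ps. G (h (T,p)))" .
    qed
    also have "\<dots> = (\<Sum>(T,p)\<in>Sigma Ts (\<lambda>_. Ps). G (h (T,p)))"
      by (rule sum.Sigma) (use fTs fPs in auto)
    finally show ?thesis .
  qed
  have s3: "(\<Sum>(T,p)\<in>Sigma Ts (\<lambda>_. Ps). G (h (T,p))) = (\<Sum>f\<in>I. G f)"
  proof (rule sum.reindex_bij_witness[where i=k and j=h])
    fix x assume x: "x \<in> Sigma Ts (\<lambda>_. Ps)"
    then obtain T p where xTp: "x = (T,p)" "T \<in> Ts" "p \<in> Ps" by auto
    have pq: "p permutes {..<q}" using xTp by (simp add: Ps_def)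
    note tt = tT[OF xTp(2)]
    have injt: "inj_on ((!) (t T)) {..<q}" using tt by (simp add: inj_on_nth)
    have img: "h (T,p) ` {..<q} = T"
    proof -
      have "h (T,p) ` {..<q} = (!) (t T) ` (p ` {..<q})" by (auto simp: h_def image_iff)
      also have "\<dots> = (!) (t T) ` {..<q}" by (simp add: permutes_image[OF pq])
      also have "\<dots> = set (t T)" using tt by (auto simp: set_conv_nth)
      finally show ?thesis using tt by simp
    qed
    show "k (h x) = x"
    proof -
      have "(\<lambda>i. if i < q then inv_into {..<q} ((!) (t T)) (h (T,p) i) else i) = p"
      proof (rule ext)
        fix i
        show "(if i < q then inv_into {..<q} ((!) (t T)) (h (T,p) i) else i) = p i"
        proof (cases "i < q")
          case True
          then have "p i < q" using permutes_in_image[OF pq] by simp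
          then show ?thesis using True inv_into_f_f[OF injt] by (simp add: h_def)
        next
          case False then show ?thesis using pq by (simp add: permutes_def)
        qed
      qed
      then show ?thesis unfolding xTp(1) k_def img by simp
    qed
    show "h x \<in> I"
    proof -
      have "h (T,p) \<in> F"
      proof -
        have "t T ! p i < B" if "i < q" for i
        proof -
          have "p i < q" using permutes_in_image[OF pq] that by simp
          then have "t T ! p i \<in> T" using tt nth_mem by metis
          then show ?thesis using xTp(2) by (auto simp: Ts_def)
        qed
        then show ?thesis by (auto simp: F_def h_def)
      qed
      moreover have "inj_on (h (T,p)) {..<q}"
      proof (rule inj_onI)
        fix i j assume ij: "i \<in> {..<q}" "j \<in> {..<q}" "h (T,p) i = h (T,p) j"
        then have "p i \<in> {..<q}" "p j \<in> {..<q}" using permutes_in_image[OF pq] by auto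
        then have "p i = p j" using ij injt by (simp add: h_def inj_on_def)
        then show "i = j" using permutes_inj[OF pq] by (simp add: inj_def)
      qed
      ultimately show ?thesis unfolding xTp(1) by (simp add: I_def)
    qed
    show "G (h x) = (case x of (T,p) \<Rightarrow> G (h (T,p)))" using xTp by simp
  next
    fix f assume f: "f \<in> I"
    then have fF: "f \<in> F" and inj: "inj_on f {..<q}" by (auto simp: I_def)
    define T where "T = f ` {..<q}"
    have TB: "T \<subseteq> {..<B}" using fF by (auto simp: T_def F_def)
    have cT: "card T = q" using card_image[OF inj] by (simp add: T_def)
    have T: "T \<in> Ts" using TB cT by (simp add: Ts_def)
    note tt = tT[OF T]
    have bt: "bij_betw ((!) (t T)) {..<q} T" using tt by (intro bij_betw_nth) simp_all
    define p where "p = (\<lambda>i. if i < q then inv_into {..<q} ((!) (t T)) (f i) else i)"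
    have kf: "k f = (T, p)" unfolding k_def p_def T_def by simp
    have bf: "bij_betw f {..<q} T" using inj by (simp add: T_def bij_betw_def)
    have bc: "bij_betw (inv_into {..<q} ((!) (t T)) \<circ> f) {..<q} {..<q}"
      by (rule bij_betw_trans[OF bf bij_betw_inv_into[OF bt]])
    have "bij_betw p {..<q} {..<q} = bij_betw (inv_into {..<q} ((!) (t T)) \<circ> f) {..<q} {..<q}"
      by (rule bij_betw_cong) (simp add: p_def)
    with bc have "bij_betw p {..<q} {..<q}" by simp
    then have pq: "p permutes {..<q}" by (rule bij_imp_permutes) (simp add: p_def)
    show "k f \<in> Sigma Ts (\<lambda>_. Ps)" using kf T pq by (simp add: Ps_def)
    show "h (k f) = f"
    proof (rule ext)
      fix i
      show "h (k f) i = f i"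
      proof (cases "i < q")
        case True
        then have "f i \<in> (!) (t T) ` {..<q}" using bt by (auto simp: bij_betw_def T_def)
        then show ?thesis using True by (simp add: kf h_def p_def f_inv_into_f)
      next
        case False
        then show ?thesis using fF by (simp add: kf h_def F_def PiE_def extensional_def)
      qed
    qed
  qed
  show ?thesis using s1 s2 s3 unfolding G_def Df_def DT_def t_def F_def Ts_def by simp
qed


lemma plucker_expand:
  fixes ys us bs :: "(nat \<Rightarrow> 'a::field) list"
  shows "plucker_coord (map (lin_comb bs) ys @ us) S =
    (\<Sum>T\<in>{T. T \<subseteq> {..<length bs} \<and> card T = length ys}.
       plucker_coord ys T * plucker_coord (map ((!) bs) (sorted_list_of_set T) @ us) S)"
proof -
  let ?q = "length ys" and ?N = "length ys + length us" and ?g = "(!) (sorted_list_of_set S)"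
  have "plucker_coord (map (lin_comb bs) ys @ us) S = det_l ?N (\<lambda>i j. ((map (lin_comb bs) ys @ us) ! i) (?g j))"
    by (simp add: plucker_coord_def)
  also have "\<dots> = (\<Sum>f\<in>PiE {..<?q} (\<lambda>_. {..<length bs}). (\<Prod>i<?q. (ys!i) (f i)) *
         det_l ?N (\<lambda>i j. if i < ?q then (bs ! f i) (?g j) else (us ! (i - ?q)) (?g j)))"
    by (rule det_rows_expand)
  also have "\<dots> = (\<Sum>T\<in>{T. T \<subseteq> {..<length bs} \<and> card T = ?q}. det_l ?q (\<lambda>i j. (ys!i) (sorted_list_of_set T ! j)) *
        det_l ?N (\<lambda>i j. if i < ?q then (bs ! (sorted_list_of_set T ! i)) (?g j) else (us ! (i - ?q)) (?g j)))"
    by (rule regroup[where a="\<lambda>i t. (ys!i) t" and R="\<lambda>t j. (bs!t) (?g j)" and P="\<lambda>i j. (us ! (i - ?q)) (?g j)"]) simp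
  also have "\<dots> = (\<Sum>T\<in>{T. T \<subseteq> {..<length bs} \<and> card T = ?q}.
       plucker_coord ys T * plucker_coord (map ((!) bs) (sorted_list_of_set T) @ us) S)"
  proof (rule sum.cong[OF refl])
    fix T assume T: "T \<in> {T. T \<subseteq> {..<length bs} \<and> card T = ?q}"
    then have fT: "finite T" by (auto intro: finite_subset)
    then have lt: "length (sorted_list_of_set T) = ?q" using T by simp
    have len: "length (map ((!) bs) (sorted_list_of_set T) @ us) = ?N" using lt by simp
    have "det_l ?N (\<lambda>i j. if i < ?q then (bs ! (sorted_list_of_set T ! i)) (?g j) else (us ! (i - ?q)) (?g j))
       = plucker_coord (map ((!) bs) (sorted_list_of_set T) @ us) S"
      unfolding plucker_coord_def len by (rule det_l_cong) (use T in \<open>simp add: nth_append\<close>)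
    then show "det_l ?q (\<lambda>i j. (ys!i) (sorted_list_of_set T ! j)) *
        det_l ?N (\<lambda>i j. if i < ?q then (bs ! (sorted_list_of_set T ! i)) (?g j) else (us ! (i - ?q)) (?g j))
      = plucker_coord ys T * plucker_coord (map ((!) bs) (sorted_list_of_set T) @ us) S"
      by (simp add: plucker_coord_def)
  qed
  finally show ?thesis .
qed



theorem proposition5p2:
  fixes n h :: nat and u w :: int
    and K :: "(nat \<Rightarrow> 'a::field) set set"
    and U W :: "(nat \<Rightarrow> 'a) set"
  assumes "1 \<le> h" and "h \<le> n - 1"
    and "linear_complex n h K"
    and "psub n u U" and "psub n w W" and "U \<subseteq> W"
    and "u \<le> int h - 1" and "w \<ge> int h + 1"
    and "\<not> interval n (int h) U W \<subseteq> K"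
  shows "linear_complex_in n U W (nat (int h - 1 - u)) (K \<inter> interval n (int h) U W)"
proof -
  define Sn where "Sn = {S. S \<subseteq> {..n} \<and> card S = h + 1}"
  obtain c :: "nat set \<Rightarrow> 'a" where
    K: "K = {X. psub n (int h) X \<and> (\<exists>vs. length vs = h + 1 \<and> is_basis n vs X \<and>
                   (\<Sum>S\<in>Sn. c S * plucker_coord vs S) = 0)}"
    using assms(3) unfolding linear_complex_def Sn_def by blast
  define fc where "fc = (\<lambda>vs. \<Sum>S\<in>Sn. c S * plucker_coord vs S)"
  obtain us0 where us0: "length us0 = nat (u + 1)" "is_basis n us0 U" and um: "u \<ge> -1"
    using assms(4) unfolding psub_def by blast
  define d where "d = nat (int h - 1 - u)"
  show ?thesis
    unfolding linear_complex_in_def d_def[symmetric]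
  proof (intro allI impI)
    fix bs assume "ident_ok n U W bs"
    then obtain us where bsne: "bs \<noteq> []" and Ub: "is_basis n us U" and Wb: "is_basis n (us @ bs) W"
      unfolding ident_ok_def by blast
    define m where "m = length bs - 1"
    have lb: "length bs = Suc m" using bsne by (simp add: m_def)
    have lbm: "length bs - 1 = m" by (simp add: m_def)
    have lus: "length us = nat (u + 1)"
      using basis_length_eq[of us us0] Ub us0 by (simp add: is_basis_def)
    have hd: "d + 1 + length us = h + 1" using lus um assms(7) by (simp add: d_def)
    define c' where "c' = (\<lambda>T. \<Sum>S\<in>Sn. c S * plucker_coord (map ((!) bs) (sorted_list_of_set T) @ us) S)"
    define Tm where "Tm = {T. T \<subseteq> {..m} \<and> card T = d + 1}"
    have Tm': "{T. T \<subseteq> {..<length bs} \<and> card T = d + 1} = Tm"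
      unfolding Tm_def lb lessThan_Suc_atMost ..
    have G: "fc (map (lin_comb bs) ys @ us) = (\<Sum>T\<in>Tm. c' T * plucker_coord ys T)"
      if ly: "length ys = d + 1" for ys
    proof -
      have "fc (map (lin_comb bs) ys @ us) = (\<Sum>S\<in>Sn. \<Sum>T\<in>Tm. c S * (plucker_coord ys T *
                plucker_coord (map ((!) bs) (sorted_list_of_set T) @ us) S))"
        unfolding fc_def plucker_expand ly Tm' by (simp add: sum_distrib_left)
      also have "\<dots> = (\<Sum>T\<in>Tm. \<Sum>S\<in>Sn. c S * (plucker_coord ys T *
                plucker_coord (map ((!) bs) (sorted_list_of_set T) @ us) S))"
        by (rule sum.swap)
      also have "\<dots> = (\<Sum>T\<in>Tm. c' T * plucker_coord ys T)"
      proof (rule sum.cong[OF refl])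
        fix T
        show "(\<Sum>S\<in>Sn. c S * (plucker_coord ys T * plucker_coord (map ((!) bs) (sorted_list_of_set T) @ us) S))
          = c' T * plucker_coord ys T"
          unfolding c'_def sum_distrib_right by (rule sum.cong[OF refl]) (simp add: mult_ac)
      qed
      finally show ?thesis .
    qed
    have R: "\<exists>ys. indep ys \<and> set ys \<subseteq> vecs m \<and> length ys = d + 1 \<and> X = lift U bs (span_l ys) \<and>
              is_basis n (map (lin_comb bs) ys @ us) X"
      if X: "X \<in> interval n (int h) U W" for X
    proof -
      from X obtain xs where xs: "length xs = h + 1" "is_basis n xs X" and UX: "U \<subseteq> X" and XW: "X \<subseteq> W"
        unfolding interval_def psub_def by (auto simp: nat_add_distrib)
      obtain ys where ys: "indep ys" "set ys \<subseteq> vecs m" "X = lift U bs (span_l ys)"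
          "is_basis n (map (lin_comb bs) ys @ us) X"
        using interval_rep[OF Ub Wb lb xs(2) UX XW] by blast
      have "length xs = length (map (lin_comb bs) ys @ us)"
        using basis_length_eq[of xs "map (lin_comb bs) ys @ us"] xs(2) ys(4) by (simp add: is_basis_def)
      then have "length ys = d + 1" using xs(1) hd by simp
      then show ?thesis using ys by blast
    qed
    define L where "L = {Y. psub m (int d) Y \<and> (\<exists>vs. length vs = d + 1 \<and> is_basis m vs Y \<and>
                   (\<Sum>T\<in>{T. T \<subseteq> {..m} \<and> card T = d + 1}. c' T * plucker_coord vs T) = 0)}"
    have nz: "\<exists>T. T \<subseteq> {..m} \<and> card T = d + 1 \<and> c' T \<noteq> 0"
    proof (rule ccontr)
      assume "\<not> ?thesis"
      then have z: "\<forall>T\<in>Tm. c' T = 0" by (auto simp: Tm_def)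
      from assms(9) obtain X0 where X0: "X0 \<in> interval n (int h) U W" "X0 \<notin> K" by blast
      obtain ys where ys: "length ys = d + 1" "is_basis n (map (lin_comb bs) ys @ us) X0"
        using R[OF X0(1)] by blast
      have "fc (map (lin_comb bs) ys @ us) = 0" unfolding G[OF ys(1)] using z by simp
      moreover have "length (map (lin_comb bs) ys @ us) = h + 1" using ys(1) hd by simp
      moreover have "psub n (int h) X0" using X0(1) by (simp add: interval_def)
      ultimately have "X0 \<in> K" unfolding K fc_def using ys(2) by blast
      then show False using X0(2) by blast
    qed
    have "linear_complex m d L"
      unfolding linear_complex_def L_def using nz by blast
    moreover have "K \<inter> interval n (int h) U W = lift U bs ` L"
    proof
      show "K \<inter> interval n (int h) U W \<subseteq> lift U bs ` L"
      proof
        fix X assume XK: "X \<in> K \<inter> interval n (int h) U W"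
        then obtain ys where ys: "indep ys" "set ys \<subseteq> vecs m" "length ys = d + 1"
            "X = lift U bs (span_l ys)" "is_basis n (map (lin_comb bs) ys @ us) X"
          using R by blast
        from XK obtain vs where vs: "length vs = h + 1" "is_basis n vs X" "fc vs = 0"
          unfolding K fc_def by blast
        have "set (map (lin_comb bs) ys @ us) \<subseteq> span_l vs"
          using vs(2) ys(5) span_l_nth[of _ "map (lin_comb bs) ys @ us"] by (auto simp: is_basis_def)
        moreover have "length (map (lin_comb bs) ys @ us) = length vs" using ys(3) hd vs(1) by simp
        ultimately obtain \<delta> where \<delta>: "\<forall>S. plucker_coord (map (lin_comb bs) ys @ us) S = \<delta> * plucker_coord vs S"
          using plucker_prop by blast
        have "fc (map (lin_comb bs) ys @ us) = \<delta> * fc vs"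
          unfolding fc_def by (simp add: \<delta> sum_distrib_left mult_ac)
        then have "(\<Sum>T\<in>Tm. c' T * plucker_coord ys T) = 0" using vs(3) G[OF ys(3)] by simp
        moreover have "is_basis m ys (span_l ys)" using ys(1,2) by (simp add: is_basis_def)
        moreover have "psub m (int d) (span_l ys)"
          unfolding psub_def using ys(3) \<open>is_basis m ys (span_l ys)\<close> by (auto simp: nat_add_distrib)
        ultimately have "span_l ys \<in> L" unfolding L_def Tm_def using ys(3) by blast
        then show "X \<in> lift U bs ` L" using ys(4) by blast
      qed
      show "lift U bs ` L \<subseteq> K \<inter> interval n (int h) U W"
      proof
        fix X assume "X \<in> lift U bs ` L"
        then obtain Y where Y: "Y \<in> L" and X: "X = lift U bs Y" by blast
        from Y obtain ys where ys: "length ys = d + 1" "is_basis m ys Y"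
          "(\<Sum>T\<in>Tm. c' T * plucker_coord ys T) = 0"
          unfolding L_def Tm_def by blast
        have ys': "indep ys" "set ys \<subseteq> vecs m" "Y = span_l ys" using ys(2) by (auto simp: is_basis_def)
        note lbas = lift_basis[OF Ub Wb lb ys'(1,2)]
        have bX: "is_basis n (map (lin_comb bs) ys @ us) X" using lbas(1) X ys'(3) by simp
        have len: "length (map (lin_comb bs) ys @ us) = h + 1" using ys(1) hd by simp
        have pX: "psub n (int h) X" unfolding psub_def using bX len
          by (auto simp: nat_add_distrib intro!: exI[of _ "map (lin_comb bs) ys @ us"])
        have "fc (map (lin_comb bs) ys @ us) = 0" using G[OF ys(1)] ys(3) by simp
        then have "X \<in> K" unfolding K fc_def using pX bX len by blast
        moreover have "X \<in> interval n (int h) U W"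
          unfolding interval_def using pX lbas(2,3) X ys'(3) by simp
        ultimately show "X \<in> K \<inter> interval n (int h) U W" by blast
      qed
    qed
    ultimately show "\<exists>L. linear_complex (length bs - 1) d L \<and> K \<inter> interval n (int h) U W = lift U bs ` L"
      unfolding lbm by blast
  qed
qed


end
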